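(* Let $Q$ be a tree quiver, let $(M,x)$ be a radiation module such that $M$ is exceptional, and let $\mathcal B=\mathcal B(M,x)$ be a radiation basis. Let $y,z\in Q_0$ be neighbors with $d(x,y)+1=d(x,z)$. Then in the coefficient quiver $\Gamma(M,\mathcal B)$ every element of $\mathcal B_z$ is joined by an arrow to precisely one element of $\mathcal B_y$. If $\dim M_y\le\dim M_z$, then every element of $\mathcal B_y$ is joined by an arrow to at least one element of $\mathcal B_z$. If $\dim M_y\ge \dim M_z$, then every element of $\mathcal B_y$ is joined by an arrow to at most one element of $\mathcal B_z$.
   Context: $k$ is a field; $Q$ is a locally finite quiver whose underlying graph is a tree; $d(u,v)$ is the distance of vertices in the underlying graph; representations are finite-dimensional. A representation $M$ is exceptional if it is indecomposable and $\operatorname{Ext}^1(M,M)=0$. $S(x)$ is the simple at $x$; $Q^x$ is $Q$ with $x$ and arrows at $x$ deleted; restriction to $Q^x$ forgets $M_x$ and the maps of arrows at $x$. Coefficient quiver: for bases $\mathcal B_z$ of $M_z$, $\Gamma(M,\mathcal B)$ has vertex set the disjoint union of the $\mathcal B_z$; for an arrow $\alpha\colon u\to w$ and $b\in\mathcal B_u$ write $M_\alpha(b)=\sum_{b'\in\mathcal B_w}c_{b'b}b'$; there is an arrow $b\to b'$ labelled $\alpha$ iff $c_{b'b}\ne0$. Radiation modules (recursive): pairs $(M,x)$, $M$ indecomposable, $\dim M_x=1$. $(S(x),x)$ is one. If $M$ has length $\ge 2$, $(M,x)$ is one if the restriction of $M$ to $Q^x$ is $\bigoplus_i N(i)$ with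 $N(i)$ indecomposable, $\operatorname{Hom}(N(i),N(j))=0$ for $i\ne j$, and for each $i$ a neighbor $y(i)$ of $x$ with $(N(i),y(i))$ a radiation module. Radiation basis containing nonzero $b\in M_x$ (recursive): for $S(x)$ it is $\{b\}$; otherwise fix such a decomposition, let $\alpha_i$ be the arrow between $x$ and $y(i)$; if $\alpha_i\colon x\to y(i)$ let $b_i$ be the $N(i)_{y(i)}$-component of $M_{\alpha_i}(b)$ in $M_{y(i)}=\bigoplus_jN(j)_{y(i)}$; if $\alpha_i\colon y(i)\to x$ let $b_i\in N(i)_{y(i)}$ with $M_{\alpha_i}(b_i)=b$; then $\mathcal B(M,x)=\{b\}\cup\bigcup_i\mathcal B(N(i),y(i))$ with $\mathcal B(N(i),y(i))$ a radiation basis of $(N(i),y(i))$ containing $b_i$. $\mathcal B_z$ denotes the elements lying in $M_z$. *)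

theory Defs
  imports Complex_Main
begin

section \<open>Quivers (vertices = UNIV :: 'v set, arrows = UNIV :: 'a set)\<close>

definition adj :: "('a \<Rightarrow> 'v) \<Rightarrow> ('a \<Rightarrow> 'v) \<Rightarrow> 'v \<Rightarrow> 'v \<Rightarrow> bool" where
  "adj src tgt u v \<longleftrightarrow> (\<exists>\<alpha>. (src \<alpha> = u \<and> tgt \<alpha> = v) \<or> (src \<alpha> = v \<and> tgt \<alpha> = u))"

definition walk :: "('a \<Rightarrow> 'v) \<Rightarrow> ('a \<Rightarrow> 'v) \<Rightarrow> 'v list \<Rightarrow> 'v \<Rightarrow> 'v \<Rightarrow> bool" where
  "walk src tgt p u v \<longleftrightarrow> p \<noteq> [] \<and> hd p = u \<and> last p = v \<and>
     (\<forall>i. Suc i < length p \<longrightarrow> adj src tgt (p ! i) (p ! Suc i))"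

definition dist_q :: "('a \<Rightarrow> 'v) \<Rightarrow> ('a \<Rightarrow> 'v) \<Rightarrow> 'v \<Rightarrow> 'v \<Rightarrow> nat" where
  "dist_q src tgt u v = (LEAST n. \<exists>p. walk src tgt p u v \<and> length p = Suc n)"

definition locally_finite_quiver :: "('a \<Rightarrow> 'v) \<Rightarrow> ('a \<Rightarrow> 'v) \<Rightarrow> bool" where
  "locally_finite_quiver src tgt \<longleftrightarrow> (\<forall>v. finite {\<alpha>. src \<alpha> = v \<or> tgt \<alpha> = v})"

definition tree_quiver :: "('a \<Rightarrow> 'v) \<Rightarrow> ('a \<Rightarrow> 'v) \<Rightarrow> bool" where
  "tree_quiver src tgt \<longleftrightarrow>
     (\<forall>\<alpha>. src \<alpha> \<noteq> tgt \<alpha>) \<and>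
     (\<forall>\<alpha> \<beta>. \<alpha> \<noteq> \<beta> \<longrightarrow> {src \<alpha>, tgt \<alpha>} \<noteq> {src \<beta>, tgt \<beta>}) \<and>
     (\<forall>u v. \<exists>p. walk src tgt p u v) \<and>
     (\<forall>u v p q. walk src tgt p u v \<and> distinct p \<and> walk src tgt q u v \<and> distinct q \<longrightarrow> p = q)"

text \<open>A representation is a family of subspaces V z of an ambient k-vector space 'w
  together with maps F \<alpha> (only their values on V (src \<alpha>) matter).\<close>

definition lin_on :: "('k::field \<Rightarrow> 'w::ab_group_add \<Rightarrow> 'w) \<Rightarrow> 'w set \<Rightarrow> 'w set \<Rightarrow> ('w \<Rightarrow> 'w) \<Rightarrow> bool" where
  "lin_on scale S T f \<longleftrightarrow> f ` S \<subseteq> T \<and> (\<forall>u\<in>S. \<forall>v\<in>S. f (u + v) = f u + f v) \<and>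
     (\<forall>c. \<forall>v\<in>S. f (scale c v) = scale c (f v))"

definition fin_dim_subspace :: "('k::field \<Rightarrow> 'w::ab_group_add \<Rightarrow> 'w) \<Rightarrow> 'w set \<Rightarrow> bool" where
  "fin_dim_subspace scale S \<longleftrightarrow> module.subspace scale S \<and>
     (\<exists>B. finite B \<and> B \<subseteq> S \<and> module.span scale B = S)"

definition is_rep :: "('k::field \<Rightarrow> 'w::ab_group_add \<Rightarrow> 'w) \<Rightarrow> ('a \<Rightarrow> 'v) \<Rightarrow> ('a \<Rightarrow> 'v)
    \<Rightarrow> ('v \<Rightarrow> 'w set) \<Rightarrow> ('a \<Rightarrow> 'w \<Rightarrow> 'w) \<Rightarrow> bool" where
  "is_rep scale src tgt V F \<longleftrightarrow> (\<forall>z. fin_dim_subspace scale (V z)) \<and>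
     finite {z. V z \<noteq> {0}} \<and> (\<forall>\<alpha>. lin_on scale (V (src \<alpha>)) (V (tgt \<alpha>)) (F \<alpha>))"

definition is_subrep :: "('k::field \<Rightarrow> 'w::ab_group_add \<Rightarrow> 'w) \<Rightarrow> ('a \<Rightarrow> 'v) \<Rightarrow> ('a \<Rightarrow> 'v)
    \<Rightarrow> ('v \<Rightarrow> 'w set) \<Rightarrow> ('a \<Rightarrow> 'w \<Rightarrow> 'w) \<Rightarrow> ('v \<Rightarrow> 'w set) \<Rightarrow> bool" where
  "is_subrep scale src tgt V F U \<longleftrightarrow>
     (\<forall>z. module.subspace scale (U z) \<and> U z \<subseteq> V z) \<and> (\<forall>\<alpha>. F \<alpha> ` U (src \<alpha>) \<subseteq> U (tgt \<alpha>))"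

definition zero_rep :: "('v \<Rightarrow> 'w::zero set) \<Rightarrow> bool" where
  "zero_rep V \<longleftrightarrow> (\<forall>z. V z = {0})"

definition is_decomp :: "('k::field \<Rightarrow> 'w::ab_group_add \<Rightarrow> 'w) \<Rightarrow> ('a \<Rightarrow> 'v) \<Rightarrow> ('a \<Rightarrow> 'v)
    \<Rightarrow> ('v \<Rightarrow> 'w set) \<Rightarrow> ('a \<Rightarrow> 'w \<Rightarrow> 'w) \<Rightarrow> nat \<Rightarrow> (nat \<Rightarrow> 'v \<Rightarrow> 'w set) \<Rightarrow> bool" where
  "is_decomp scale src tgt V F n N \<longleftrightarrow>
     (\<forall>i<n. is_subrep scale src tgt V F (N i)) \<and>
     (\<forall>z. \<forall>v\<in>V z. \<exists>!u. (\<forall>i<n. u i \<in> N i z) \<and> (\<forall>i\<ge>n. u i = 0) \<and> v = (\<Sum>i<n. u i))"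

definition indecomposable :: "('k::field \<Rightarrow> 'w::ab_group_add \<Rightarrow> 'w) \<Rightarrow> ('a \<Rightarrow> 'v) \<Rightarrow> ('a \<Rightarrow> 'v)
    \<Rightarrow> ('v \<Rightarrow> 'w set) \<Rightarrow> ('a \<Rightarrow> 'w \<Rightarrow> 'w) \<Rightarrow> bool" where
  "indecomposable scale src tgt V F \<longleftrightarrow> is_rep scale src tgt V F \<and> \<not> zero_rep V \<and>
     (\<forall>N. is_decomp scale src tgt V F 2 N \<longrightarrow> zero_rep (N 0) \<or> zero_rep (N 1))"

definition is_hom :: "('k::field \<Rightarrow> 'w::ab_group_add \<Rightarrow> 'w) \<Rightarrow> ('a \<Rightarrow> 'v) \<Rightarrow> ('a \<Rightarrow> 'v)
    \<Rightarrow> ('v \<Rightarrow> 'w set) \<Rightarrow> ('a \<Rightarrow> 'w \<Rightarrow> 'w) \<Rightarrow> ('v \<Rightarrow> 'w set) \<Rightarrow> ('a \<Rightarrow> 'w \<Rightarrow> 'w)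
    \<Rightarrow> ('v \<Rightarrow> 'w \<Rightarrow> 'w) \<Rightarrow> bool" where
  "is_hom scale src tgt V1 F1 V2 F2 h \<longleftrightarrow> (\<forall>z. lin_on scale (V1 z) (V2 z) (h z)) \<and>
     (\<forall>\<alpha>. \<forall>v\<in>V1 (src \<alpha>). h (tgt \<alpha>) (F1 \<alpha> v) = F2 \<alpha> (h (src \<alpha>) v))"

definition hom_zero :: "('k::field \<Rightarrow> 'w::ab_group_add \<Rightarrow> 'w) \<Rightarrow> ('a \<Rightarrow> 'v) \<Rightarrow> ('a \<Rightarrow> 'v)
    \<Rightarrow> ('v \<Rightarrow> 'w set) \<Rightarrow> ('a \<Rightarrow> 'w \<Rightarrow> 'w) \<Rightarrow> ('v \<Rightarrow> 'w set) \<Rightarrow> ('a \<Rightarrow> 'w \<Rightarrow> 'w) \<Rightarrow> bool" where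
  "hom_zero scale src tgt V1 F1 V2 F2 \<longleftrightarrow>
     (\<forall>h. is_hom scale src tgt V1 F1 V2 F2 h \<longrightarrow> (\<forall>z. \<forall>v\<in>V1 z. h z v = 0))"

text \<open>Ext^1(M,M) = 0, via Ringel's standard exact sequence for path algebras
  0 \<rightarrow> Hom(M,N) \<rightarrow> \<Oplus>_z Hom(M_z,N_z) \<rightarrow> \<Oplus>_\<alpha> Hom(M_{s\<alpha>},N_{t\<alpha>}) \<rightarrow> Ext^1(M,N) \<rightarrow> 0:
  the middle map is surjective.\<close>
definition ext1_zero :: "('k::field \<Rightarrow> 'w::ab_group_add \<Rightarrow> 'w) \<Rightarrow> ('a \<Rightarrow> 'v) \<Rightarrow> ('a \<Rightarrow> 'v)
    \<Rightarrow> ('v \<Rightarrow> 'w set) \<Rightarrow> ('a \<Rightarrow> 'w \<Rightarrow> 'w) \<Rightarrow> bool" where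
  "ext1_zero scale src tgt V F \<longleftrightarrow>
     (\<forall>g. (\<forall>\<alpha>. lin_on scale (V (src \<alpha>)) (V (tgt \<alpha>)) (g \<alpha>)) \<longrightarrow>
        (\<exists>h. (\<forall>z. lin_on scale (V z) (V z) (h z)) \<and>
             (\<forall>\<alpha>. \<forall>v\<in>V (src \<alpha>). g \<alpha> v = h (tgt \<alpha>) (F \<alpha> v) - F \<alpha> (h (src \<alpha>) v))))"

definition exceptional :: "('k::field \<Rightarrow> 'w::ab_group_add \<Rightarrow> 'w) \<Rightarrow> ('a \<Rightarrow> 'v) \<Rightarrow> ('a \<Rightarrow> 'v)
    \<Rightarrow> ('v \<Rightarrow> 'w set) \<Rightarrow> ('a \<Rightarrow> 'w \<Rightarrow> 'w) \<Rightarrow> bool" where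
  "exceptional scale src tgt V F \<longleftrightarrow>
     indecomposable scale src tgt V F \<and> ext1_zero scale src tgt V F"

text \<open>Restriction to Q^x, modelled as the representation of Q with zero space at x
  and zero maps on the arrows incident to x.\<close>
definition restr_sp :: "('v \<Rightarrow> 'w::zero set) \<Rightarrow> 'v \<Rightarrow> 'v \<Rightarrow> 'w set" where
  "restr_sp V x = V(x := {0})"

definition restr_map :: "('a \<Rightarrow> 'v) \<Rightarrow> ('a \<Rightarrow> 'v) \<Rightarrow> ('a \<Rightarrow> 'w::zero \<Rightarrow> 'w) \<Rightarrow> 'v \<Rightarrow> 'a \<Rightarrow> 'w \<Rightarrow> 'w" where
  "restr_map src tgt F x = (\<lambda>\<alpha>. if src \<alpha> = x \<or> tgt \<alpha> = x then (\<lambda>_. 0) else F \<alpha>)"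

inductive radiation :: "('k::field \<Rightarrow> 'w::ab_group_add \<Rightarrow> 'w) \<Rightarrow> ('a \<Rightarrow> 'v) \<Rightarrow> ('a \<Rightarrow> 'v)
    \<Rightarrow> ('v \<Rightarrow> 'w set) \<Rightarrow> ('a \<Rightarrow> 'w \<Rightarrow> 'w) \<Rightarrow> 'v \<Rightarrow> bool"
  for scale src tgt where
  simple: "\<lbrakk> is_rep scale src tgt V F; vector_space.dim scale (V x) = 1; \<forall>z. z \<noteq> x \<longrightarrow> V z = {0} \<rbrakk>
     \<Longrightarrow> radiation scale src tgt V F x"
| step: "\<lbrakk> indecomposable scale src tgt V F; vector_space.dim scale (V x) = 1;
     \<exists>z. z \<noteq> x \<and> V z \<noteq> {0};
     is_decomp scale src tgt (restr_sp V x) (restr_map src tgt F x) n N;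
     \<forall>i<n. indecomposable scale src tgt (N i) (restr_map src tgt F x);
     \<forall>i<n. \<forall>j<n. i \<noteq> j \<longrightarrow>
        hom_zero scale src tgt (N i) (restr_map src tgt F x) (N j) (restr_map src tgt F x);
     \<forall>i<n. adj src tgt x (y i) \<and> radiation scale src tgt (N i) (restr_map src tgt F x) (y i) \<rbrakk>
     \<Longrightarrow> radiation scale src tgt V F x"

text \<open>rad_basis scale src tgt V F x b B: B is a radiation basis of (V,F,x) containing b,
  where B z is the set of basis elements lying in V z.\<close>
inductive rad_basis :: "('k::field \<Rightarrow> 'w::ab_group_add \<Rightarrow> 'w) \<Rightarrow> ('a \<Rightarrow> 'v) \<Rightarrow> ('a \<Rightarrow> 'v)
    \<Rightarrow> ('v \<Rightarrow> 'w set) \<Rightarrow> ('a \<Rightarrow> 'w \<Rightarrow> 'w) \<Rightarrow> 'v \<Rightarrow> 'w \<Rightarrow> ('v \<Rightarrow> 'w set) \<Rightarrow> bool"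
  for scale src tgt where
  simple: "\<lbrakk> is_rep scale src tgt V F; vector_space.dim scale (V x) = 1; \<forall>z. z \<noteq> x \<longrightarrow> V z = {0};
     b \<in> V x; b \<noteq> 0 \<rbrakk>
     \<Longrightarrow> rad_basis scale src tgt V F x b (\<lambda>z. if z = x then {b} else {})"
| step: "\<lbrakk> indecomposable scale src tgt V F; vector_space.dim scale (V x) = 1;
     \<exists>z. z \<noteq> x \<and> V z \<noteq> {0}; b \<in> V x; b \<noteq> 0;
     is_decomp scale src tgt (restr_sp V x) (restr_map src tgt F x) n N;
     \<forall>i<n. indecomposable scale src tgt (N i) (restr_map src tgt F x);
     \<forall>i<n. \<forall>j<n. i \<noteq> j \<longrightarrow>
        hom_zero scale src tgt (N i) (restr_map src tgt F x) (N j) (restr_map src tgt F x);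
     \<forall>i<n. adj src tgt x (y i) \<and> radiation scale src tgt (N i) (restr_map src tgt F x) (y i);
     \<forall>i<n. \<forall>\<alpha>. src \<alpha> = x \<and> tgt \<alpha> = y i \<longrightarrow>
        (\<exists>u. (\<forall>j<n. u j \<in> N j (y i)) \<and> F \<alpha> b = (\<Sum>j<n. u j) \<and> bb i = u i);
     \<forall>i<n. \<forall>\<alpha>. src \<alpha> = y i \<and> tgt \<alpha> = x \<longrightarrow> bb i \<in> N i (y i) \<and> F \<alpha> (bb i) = b;
     \<forall>i<n. rad_basis scale src tgt (N i) (restr_map src tgt F x) (y i) (bb i) (BB i) \<rbrakk>
     \<Longrightarrow> rad_basis scale src tgt V F x b
           (\<lambda>z. (if z = x then {b} else {}) \<union> (\<Union>i<n. BB i z))"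

definition coeff_arrow :: "('k::field \<Rightarrow> 'w::ab_group_add \<Rightarrow> 'w) \<Rightarrow> ('a \<Rightarrow> 'v) \<Rightarrow> ('a \<Rightarrow> 'v)
    \<Rightarrow> ('a \<Rightarrow> 'w \<Rightarrow> 'w) \<Rightarrow> ('v \<Rightarrow> 'w set) \<Rightarrow> 'a \<Rightarrow> 'v \<times> 'w \<Rightarrow> 'v \<times> 'w \<Rightarrow> bool" where
  "coeff_arrow scale src tgt F B \<alpha> p q \<longleftrightarrow>
     fst p = src \<alpha> \<and> fst q = tgt \<alpha> \<and> snd p \<in> B (fst p) \<and> snd q \<in> B (fst q) \<and>
     module.representation scale (B (tgt \<alpha>)) (F \<alpha> (snd p)) (snd q) \<noteq> 0"

definition joined :: "('k::field \<Rightarrow> 'w::ab_group_add \<Rightarrow> 'w) \<Rightarrow> ('a \<Rightarrow> 'v) \<Rightarrow> ('a \<Rightarrow> 'v)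
    \<Rightarrow> ('a \<Rightarrow> 'w \<Rightarrow> 'w) \<Rightarrow> ('v \<Rightarrow> 'w set) \<Rightarrow> 'v \<times> 'w \<Rightarrow> 'v \<times> 'w \<Rightarrow> bool" where
  "joined scale src tgt F B p q \<longleftrightarrow>
     (\<exists>\<alpha>. coeff_arrow scale src tgt F B \<alpha> p q \<or> coeff_arrow scale src tgt F B \<alpha> q p)"

end

theory Submission
  imports Defs
begin


lemma succ_nth: "successively P xs \<longleftrightarrow> (\<forall>i. Suc i < length xs \<longrightarrow> P (xs!i) (xs!Suc i))"
proof (induction xs rule: induct_list012)
  case (3 x y zs)
  show ?case
  proof
    assume "successively P (x # y # zs)"
    then show "\<forall>i. Suc i < length (x # y # zs) \<longrightarrow> P ((x # y # zs) ! i) ((x # y # zs) ! Suc i)"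
      using 3(2) by (auto simp: nth_Cons split: nat.splits)
  next
    assume h: "\<forall>i. Suc i < length (x # y # zs) \<longrightarrow> P ((x # y # zs) ! i) ((x # y # zs) ! Suc i)"
    have "P x y" using h[rule_format, of 0] by simp
    moreover have "\<forall>i. Suc i < length (y # zs) \<longrightarrow> P ((y # zs) ! i) ((y # zs) ! Suc i)"
      using h by (metis Suc_less_eq length_Cons nth_Cons_Suc)
    ultimately show "successively P (x # y # zs)" using 3(2) by simp
  qed
qed auto

lemma walk_iff: "walk src tgt p u v \<longleftrightarrow> p \<noteq> [] \<and> hd p = u \<and> last p = v \<and> successively (adj src tgt) p"
  unfolding walk_def succ_nth by blast

lemma adj_sym: "adj src tgt u v \<Longrightarrow> adj src tgt v u"
  by (auto simp: adj_def)

lemma walk_Nil[simp]: "\<not> walk src tgt [] u v"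
  by (simp add: walk_iff)

lemma walk_single[simp]: "walk src tgt [w] u v \<longleftrightarrow> w = u \<and> u = v"
  by (auto simp: walk_iff)

lemma walk_Cons2[simp]: "walk src tgt (a # w # p) u v \<longleftrightarrow> a = u \<and> adj src tgt u w \<and> walk src tgt (w # p) w v"
  by (auto simp: walk_iff)

lemma walk_snoc: "walk src tgt p u w \<Longrightarrow> adj src tgt w v \<Longrightarrow> walk src tgt (p @ [v]) u v"
  by (auto simp: walk_iff successively_append_iff)

lemma walk_short:
  assumes "walk src tgt p u v" "\<not> distinct p"
  shows "\<exists>q. walk src tgt q u v \<and> length q < length p \<and> set q \<subseteq> set p"
proof -
  obtain xs ys zs y where p: "p = xs @ [y] @ ys @ [y] @ zs"
    using not_distinct_decomp[OF assms(2)] by blast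
  let ?q = "xs @ [y] @ zs"
  have "successively (adj src tgt) p" using assms(1) by (simp add: walk_iff)
  then have "successively (adj src tgt) ?q"
    unfolding p by (auto simp: successively_append_iff successively_Cons)
  moreover have "hd ?q = u" "last ?q = v" using assms(1) unfolding p walk_iff
    by (auto simp: hd_append last_append)
  ultimately have "walk src tgt ?q u v" unfolding walk_iff by simp
  moreover have "length ?q < length p" unfolding p by simp
  moreover have "set ?q \<subseteq> set p" unfolding p by auto
  ultimately show ?thesis by blast
qed

lemma walk_distinct:
  "walk src tgt p u v \<Longrightarrow> \<exists>q. walk src tgt q u v \<and> distinct q \<and> set q \<subseteq> set p \<and> length q \<le> length p"
proof (induction "length p" arbitrary: p rule: less_induct)
  case less
  show ?case
  proof (cases "distinct p")
    case True then show ?thesis using less.prems by (intro exI[of _ p]) simp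
  next
    case False
    then obtain q where q: "walk src tgt q u v" "length q < length p" "set q \<subseteq> set p"
      using walk_short[OF less.prems] by blast
    obtain r where r: "walk src tgt r u v" "distinct r" "set r \<subseteq> set q" "length r \<le> length q"
      using less.hyps[OF q(2) q(1)] by blast
    show ?thesis
      by (rule exI[of _ r]) (use r q in auto)
  qed
qed

lemma dist_le: "walk src tgt p u v \<Longrightarrow> dist_q src tgt u v < length p"
proof -
  assume w: "walk src tgt p u v"
  then have "p \<noteq> []" by (auto simp: walk_iff)
  then have "length p = Suc (length p - 1)" by simp
  then have "\<exists>p'. walk src tgt p' u v \<and> length p' = Suc (length p - 1)" using w by blast
  then have "dist_q src tgt u v \<le> length p - 1"
    unfolding dist_q_def by (rule Least_le)
  then show ?thesis using \<open>p \<noteq> []\<close> by (cases p) auto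
qed

lemma dist_ex:
  assumes "tree_quiver src tgt"
  shows "\<exists>p. walk src tgt p u v \<and> length p = Suc (dist_q src tgt u v)"
proof -
  obtain p where w: "walk src tgt p u v" using assms unfolding tree_quiver_def by blast
  then have "p \<noteq> []" by (auto simp: walk_iff)
  then have "\<exists>n p. walk src tgt p u v \<and> length p = Suc n" using w
    by (intro exI[of _ "length p - 1"] exI[of _ p]) auto
  then show ?thesis unfolding dist_q_def by (rule LeastI_ex)
qed

lemma dist_self[simp]: "dist_q src tgt u u = 0"
  using dist_le[of src tgt "[u]" u u] by simp

lemma dist_0: "tree_quiver src tgt \<Longrightarrow> dist_q src tgt u v = 0 \<Longrightarrow> u = v"
  using dist_ex[of src tgt u v] by (auto simp: length_Suc_conv)

lemma dist_adj:
  assumes "tree_quiver src tgt" "adj src tgt w v"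
  shows "dist_q src tgt u v \<le> dist_q src tgt u w + 1"
proof -
  obtain p where "walk src tgt p u w" "length p = Suc (dist_q src tgt u w)"
    using dist_ex[OF assms(1)] by blast
  then have "walk src tgt (p @ [v]) u v" "length (p @ [v]) = Suc (Suc (dist_q src tgt u w))"
    using walk_snoc assms(2) by auto
  then show ?thesis using dist_le[of src tgt "p @ [v]" u v] by simp
qed

lemma shortest_distinct:
  assumes "walk src tgt p u v" "length p = Suc (dist_q src tgt u v)"
  shows "distinct p"
proof (rule ccontr)
  assume "\<not> distinct p"
  then obtain q where q: "walk src tgt q u v" "length q < length p"
    using walk_short[OF assms(1)] by blast
  have "dist_q src tgt u v < length q" using dist_le[OF q(1)] .
  then show False using q(2) assms(2) by simp
qed

lemma G1:
  assumes T: "tree_quiver src tgt" and a: "adj src tgt x w"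
    and p: "walk src tgt p w v" and nx: "x \<notin> set p"
  shows "dist_q src tgt x v = dist_q src tgt w v + 1"
proof -
  obtain q where q: "walk src tgt q w v" "distinct q" "set q \<subseteq> set p"
    using walk_distinct[OF p] by blast
  have qx: "x \<notin> set q" using q nx by blast
  obtain q' where q': "q = w # q'" using q(1) by (cases q) (auto simp: walk_iff)
  have wq: "walk src tgt (x # q) x v" using q(1) a q' by (cases q') auto
  obtain r where r: "walk src tgt r x v" "length r = Suc (dist_q src tgt x v)"
    using dist_ex[OF T] by blast
  have "distinct r" using shortest_distinct[OF r(1) r(2)] .
  moreover have "distinct (x # q)" using q(2) qx by simp
  ultimately have "r = x # q" using T wq r(1) unfolding tree_quiver_def by blast
  then have "dist_q src tgt w v < length q" "length q = dist_q src tgt x v"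
    using dist_le[OF q(1)] r(2) by auto
  moreover obtain s where s: "walk src tgt s w v" "length s = Suc (dist_q src tgt w v)"
    using dist_ex[OF T] by blast
  have "walk src tgt (x # s) x v" using s a by (cases s) (auto simp: walk_iff)
  then have "dist_q src tgt x v < Suc (Suc (dist_q src tgt w v))" using dist_le[of src tgt "x # s" x v] s(2) by simp
  ultimately show ?thesis by simp
qed



context vector_space begin

lemma lin_on_0: "lin_on scale S T f \<Longrightarrow> subspace S \<Longrightarrow> f 0 = 0"
  unfolding lin_on_def using subspace_0[of S] by (metis add_0 add_left_imp_eq add.right_neutral)

lemma lin_on_in: "lin_on scale S T f \<Longrightarrow> v \<in> S \<Longrightarrow> f v \<in> T"
  unfolding lin_on_def by blast

lemma lin_on_add: "lin_on scale S T f \<Longrightarrow> u \<in> S \<Longrightarrow> v \<in> S \<Longrightarrow> f (u + v) = f u + f v"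
  unfolding lin_on_def by blast

lemma lin_on_scale: "lin_on scale S T f \<Longrightarrow> v \<in> S \<Longrightarrow> f (c *s v) = c *s f v"
  unfolding lin_on_def by blast

lemma rep_zero_all:
  assumes "independent Q" "w \<in> span Q" "\<forall>q\<in>Q. representation Q w q = 0"
  shows "w = 0"
proof -
  have "{b. representation Q w b \<noteq> 0} = {}"
    using assms representation_ne_zero by blast
  then show ?thesis using sum_nonzero_representation_eq[OF assms(1,2)] by simp
qed

lemma rep_single:
  assumes "independent Q" "w \<in> span Q" "q \<in> Q" "\<forall>q'\<in>Q. q' \<noteq> q \<longrightarrow> representation Q w q' = 0"
  shows "w = representation Q w q *s q"
proof -
  have s: "{b. representation Q w b \<noteq> 0} \<subseteq> {q}"
    using assms representation_ne_zero by blast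
  have "w = (\<Sum>b | representation Q w b \<noteq> 0. representation Q w b *s b)"
    using sum_nonzero_representation_eq[OF assms(1,2)] by simp
  also have "\<dots> = (\<Sum>b\<in>{q}. representation Q w b *s b)"
    by (rule sum.mono_neutral_left) (use s in auto)
  finally show ?thesis by simp
qed

lemma dim1_span:
  assumes "dim S = 1" "b \<in> S" "b \<noteq> 0"
  shows "S \<subseteq> span {b}"
proof -
  obtain E where E: "{b} \<subseteq> E" "E \<subseteq> S" "independent E" "S \<subseteq> span E"
    using maximal_independent_subset_extend[of "{b}" S] assms by auto
  have "card E = 1" using basis_card_eq_dim[OF E(2,4,3)] assms(1) by simp
  then have "E = {b}" using E(1) by (auto simp: card_1_singleton_iff)
  then show ?thesis using E(4) by simp
qed

lemma indep_union:
  fixes n :: nat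
  assumes ind: "\<And>i. i < n \<Longrightarrow> independent (C i)"
    and sub: "\<And>i. i < n \<Longrightarrow> C i \<subseteq> S i"
    and ssp: "\<And>i. i < n \<Longrightarrow> subspace (S i)"
    and uniq: "\<And>u. (\<forall>i<n. u i \<in> S i) \<Longrightarrow> (\<Sum>i<n. u i) = 0 \<Longrightarrow> \<forall>i<n. u i = 0"
    and disj: "\<And>i j c. i < n \<Longrightarrow> j < n \<Longrightarrow> i \<noteq> j \<Longrightarrow> c \<in> C i \<Longrightarrow> c \<notin> C j"
  shows "independent (\<Union>i<n. C i)"
  unfolding independent_explicit_finite_subsets
proof (intro allI impI ballI)
  fix t u v
  assume t: "t \<subseteq> (\<Union>i<n. C i)" and ft: "finite t" and s0: "(\<Sum>v\<in>t. u v *s v) = 0" and v: "v \<in> t"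
  define w where "w i = (\<Sum>v\<in>t \<inter> C i. u v *s v)" for i
  have tU: "t = (\<Union>i\<in>{..<n}. t \<inter> C i)" using t by blast
  have "(\<Sum>v\<in>t. u v *s v) = (\<Sum>i<n. w i)"
    unfolding w_def
    by (subst tU, rule sum.UNION_disjoint) (use ft disj in auto)
  moreover have "\<forall>i<n. w i \<in> S i"
    unfolding w_def using sub ssp by (auto intro!: subspace_sum subspace_scale)
  ultimately have w0: "\<forall>i<n. w i = 0" using uniq s0 by simp
  obtain i where i: "i < n" "v \<in> C i" using t v by blast
  have "independent (C i)" using ind i by simp
  moreover have "t \<inter> C i \<subseteq> C i" "finite (t \<inter> C i)" using ft by auto
  moreover have "(\<Sum>v\<in>t \<inter> C i. u v *s v) = 0" using w0 i unfolding w_def by simp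
  ultimately have "\<forall>v\<in>t \<inter> C i. u v = 0"
    unfolding independent_explicit_finite_subsets by blast
  then show "u v = 0" using i v by blast
qed

lemma lin_vanish:
  assumes f: "lin_on scale (span P) T f" and ssT: "subspace T"
    and phadd: "\<And>a b. a \<in> T \<Longrightarrow> b \<in> T \<Longrightarrow> ph (a + b) = ph a + ph b"
    and phsc: "\<And>a c. a \<in> T \<Longrightarrow> ph (c *s a) = c * ph a"
    and van: "\<And>p. p \<in> P \<Longrightarrow> ph (f p) = 0"
  shows "\<forall>u\<in>span P. ph (f u) = 0"
proof -
  have ph0: "ph 0 = 0" using phsc[of 0 0] subspace_0[OF ssT] by simp
  have "subspace {u. u \<in> span P \<and> ph (f u) = 0}"
    unfolding subspace_def
    using lin_on_0[OF f] ph0 phadd phsc lin_on_in[OF f] lin_on_add[OF f] lin_on_scale[OF f]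
    by (auto simp: span_zero span_add span_scale)
  then have "span P \<subseteq> {u. u \<in> span P \<and> ph (f u) = 0}"
    by (rule span_minimal[rotated]) (use van span_base in auto)
  then show ?thesis by blast
qed

lemma max_rank:
  assumes rep: "is_rep scale src tgt V F" and ext: "ext1_zero scale src tgt V F"
  shows "(\<forall>u\<in>V (src \<alpha>). F \<alpha> u = 0 \<longrightarrow> u = 0) \<or> (\<forall>w\<in>V (tgt \<alpha>). \<exists>u\<in>V (src \<alpha>). F \<alpha> u = w)"
proof (rule ccontr)
  assume "\<not> ?thesis"
  then obtain k c where k: "k \<in> V (src \<alpha>)" "F \<alpha> k = 0" "k \<noteq> 0"
    and c: "c \<in> V (tgt \<alpha>)" "\<forall>u\<in>V (src \<alpha>). F \<alpha> u \<noteq> c" by blast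
  have ss: "\<And>z. subspace (V z)" using rep unfolding is_rep_def fin_dim_subspace_def by blast
  obtain E where E: "{k} \<subseteq> E" "E \<subseteq> V (src \<alpha>)" "independent E" "V (src \<alpha>) \<subseteq> span E"
    using maximal_independent_subset_extend[of "{k}" "V (src \<alpha>)"] k by auto
  define ph where "ph v = representation E v k" for v
  define g where "g \<beta> = (if \<beta> = \<alpha> then (\<lambda>v. ph v *s c) else (\<lambda>v. 0))" for \<beta>
  have "lin_on scale (V (src \<beta>)) (V (tgt \<beta>)) (g \<beta>)" for \<beta>
  proof (cases "\<beta> = \<alpha>")
    case True
    have a: "ph (u + v) = ph u + ph v" if "u \<in> V (src \<alpha>)" "v \<in> V (src \<alpha>)" for u v
    proof -
      have "u \<in> span E" "v \<in> span E" using that E(4) by auto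
      then show ?thesis unfolding ph_def by (simp add: representation_add[OF E(3)])
    qed
    have s: "ph (a *s v) = a * ph v" if "v \<in> V (src \<alpha>)" for a v
    proof -
      have "v \<in> span E" using that E(4) by auto
      then show ?thesis unfolding ph_def by (simp add: representation_scale[OF E(3)])
    qed
    show ?thesis using True a s c(1) ss unfolding lin_on_def g_def
      by (auto simp: subspace_scale scale_left_distrib)
  next
    case False
    then show ?thesis using ss unfolding lin_on_def g_def by (auto simp: subspace_0)
  qed
  then obtain h where h: "\<forall>z. lin_on scale (V z) (V z) (h z)"
    "\<forall>\<alpha>. \<forall>v\<in>V (src \<alpha>). g \<alpha> v = h (tgt \<alpha>) (F \<alpha> v) - F \<alpha> (h (src \<alpha>) v)"
    using ext unfolding ext1_zero_def by blast
  have "ph k = 1" unfolding ph_def using representation_basis[OF E(3)] E(1) by auto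
  then have "c = h (tgt \<alpha>) 0 - F \<alpha> (h (src \<alpha>) k)"
    using h(2)[rule_format, OF k(1)] k(2) unfolding g_def by simp
  also have "h (tgt \<alpha>) 0 = 0" using lin_on_0[OF h(1)[rule_format] ss] .
  finally have c2: "c = - F \<alpha> (h (src \<alpha>) k)" by simp
  have hk: "h (src \<alpha>) k \<in> V (src \<alpha>)" using lin_on_in[OF h(1)[rule_format] k(1)] .
  then have "(-1) *s h (src \<alpha>) k \<in> V (src \<alpha>)" using ss subspace_scale by blast
  moreover have Fl: "lin_on scale (V (src \<alpha>)) (V (tgt \<alpha>)) (F \<alpha>)"
    using rep unfolding is_rep_def by blast
  moreover have "F \<alpha> ((-1) *s h (src \<alpha>) k) = c"
    using lin_on_scale[OF Fl hk, of "-1"] c2 by simp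
  ultimately show False using c(2) by blast
qed

end


definition RB where
 "RB scale src tgt V F x b B \<longleftrightarrow> (\<forall>z. B z \<subseteq> V z \<and> \<not> module.dependent scale (B z) \<and> V z \<subseteq> module.span scale (B z)) \<and>
   B x = {b} \<and> b \<in> V x \<and> b \<noteq> 0 \<and>
   (\<forall>v. B v \<noteq> {} \<longrightarrow> (\<exists>p. walk src tgt p x v \<and> (\<forall>w\<in>set p. B w \<noteq> {}))) \<and>
   (\<forall>y z c. adj src tgt y z \<longrightarrow> dist_q src tgt x y + 1 = dist_q src tgt x z \<longrightarrow> c \<in> B z \<longrightarrow>
      (\<exists>!c'. c' \<in> B y \<and> joined scale src tgt F B (z,c) (y,c')))"

lemma ex1_eq: "\<exists>!x. P x \<Longrightarrow> P a \<Longrightarrow> P b \<Longrightarrow> a = b" by blast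

context vector_space begin

lemma RB_I:
  assumes "\<And>z. B z \<subseteq> V z" "\<And>z. independent (B z)" "\<And>z. V z \<subseteq> span (B z)"
    "B x = {b}" "b \<in> V x" "b \<noteq> 0"
    "\<And>v. B v \<noteq> {} \<Longrightarrow> \<exists>p. walk src tgt p x v \<and> (\<forall>w\<in>set p. B w \<noteq> {})"
    "\<And>y z c. adj src tgt y z \<Longrightarrow> dist_q src tgt x y + 1 = dist_q src tgt x z \<Longrightarrow> c \<in> B z \<Longrightarrow>
      (\<exists>!c'. c' \<in> B y \<and> joined scale src tgt F B (z,c) (y,c'))"
  shows "RB scale src tgt V F x b B"
  unfolding RB_def
  apply (intro conjI allI impI)
  using assms apply simp_all
  done

lemma RB_D:
  assumes "RB scale src tgt V F x b B"
  shows "B z \<subseteq> V z" "independent (B z)" "V z \<subseteq> span (B z)"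
    "B x = {b}" "b \<in> V x" "b \<noteq> 0"
    "B v \<noteq> {} \<Longrightarrow> \<exists>p. walk src tgt p x v \<and> (\<forall>w\<in>set p. B w \<noteq> {})"
    "adj src tgt y z' \<Longrightarrow> dist_q src tgt x y + 1 = dist_q src tgt x z' \<Longrightarrow> c \<in> B z' \<Longrightarrow>
      (\<exists>!c'. c' \<in> B y \<and> joined scale src tgt F B (z',c) (y,c'))"
  using assms unfolding RB_def by simp_all

lemma rb_simple:
  assumes rep: "is_rep scale src tgt V F" and dimx: "dim (V x) = 1"
    and oth: "\<forall>z. z \<noteq> x \<longrightarrow> V z = {0}" and bV: "b \<in> V x" and b0: "b \<noteq> 0"
  shows "RB scale src tgt V F x b (\<lambda>z. if z = x then {b} else {})"
proof -
  have R1: "(if z = x then {b} else {}) \<subseteq> V z \<and> independent (if z = x then {b} else {}) \<and>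
      V z \<subseteq> span (if z = x then {b} else {})" for z
  proof (cases "z = x")
    case True
    then show ?thesis using bV b0 dim1_span[OF dimx bV b0] by simp
  next
    case False
    then show ?thesis using oth by (simp add: span_zero independent_empty)
  qed
  have R3: "\<exists>p. walk src tgt p x v \<and> (\<forall>w\<in>set p. (if w = x then {b} else {}) \<noteq> {})"
    if "(if v = x then {b} else {}) \<noteq> {}" for v
  proof -
    have "v = x" using that by (cases "v = x") auto
    then show ?thesis by (intro exI[of _ "[x]"]) simp
  qed
  have R4: "\<exists>!c'. c' \<in> (if y = x then {b} else {}) \<and> joined scale src tgt F (\<lambda>z. if z = x then {b} else {}) (z,c) (y,c')"
    if "adj src tgt y z" "dist_q src tgt x y + 1 = dist_q src tgt x z" "c \<in> (if z = x then {b} else {})" for y z c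
  proof -
    have "z = x" using that(3) by (cases "z = x") auto
    then show ?thesis using that(2) by simp
  qed
  let ?B = "\<lambda>z. if z = x then {b} else {}"
  show ?thesis
  proof (rule RB_I[where B="?B" and V=V and x=x and b=b and src=src and tgt=tgt and F=F])
    show "\<And>z. ?B z \<subseteq> V z" "\<And>z. independent (?B z)" "\<And>z. V z \<subseteq> span (?B z)" using R1 by blast+
    show "?B x = {b}" "b \<in> V x" "b \<noteq> 0" using bV b0 by simp_all
    show "\<And>v. ?B v \<noteq> {} \<Longrightarrow> \<exists>p. walk src tgt p x v \<and> (\<forall>w\<in>set p. ?B w \<noteq> {})" by (fact R3)
    show "\<And>y z c. adj src tgt y z \<Longrightarrow> dist_q src tgt x y + 1 = dist_q src tgt x z \<Longrightarrow> c \<in> ?B z \<Longrightarrow>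
      (\<exists>!c'. c' \<in> ?B y \<and> joined scale src tgt F ?B (z,c) (y,c'))" by (fact R4)
  qed
qed

lemma rb_step:
  fixes n :: nat
  assumes T: "tree_quiver src tgt"
    and ind: "indecomposable scale src tgt V F"
    and dimx: "dim (V x) = 1"
    and bV: "b \<in> V x" and b0: "b \<noteq> 0"
    and dec: "is_decomp scale src tgt (restr_sp V x) (restr_map src tgt F x) n N"
    and ya: "\<forall>i<n. adj src tgt x (y i)"
    and h10: "\<forall>i<n. \<forall>\<alpha>. src \<alpha> = x \<and> tgt \<alpha> = y i \<longrightarrow>
        (\<exists>u. (\<forall>j<n. u j \<in> N j (y i)) \<and> F \<alpha> b = (\<Sum>j<n. u j) \<and> bb i = u i)"
    and h11: "\<forall>i<n. \<forall>\<alpha>. src \<alpha> = y i \<and> tgt \<alpha> = x \<longrightarrow> bb i \<in> N i (y i) \<and> F \<alpha> (bb i) = b"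
    and IH: "\<forall>i<n. RB scale src tgt (N i) (restr_map src tgt F x) (y i) (bb i) (BB i)"
  shows "RB scale src tgt V F x b (\<lambda>z. (if z = x then {b} else {}) \<union> (\<Union>i<n. BB i z))"
proof -
  let ?W = "restr_sp V x" and ?G = "restr_map src tgt F x"
  define B where "B z = (if z = x then {b} else {}) \<union> (\<Union>i<n. BB i z)" for z
  have rep: "is_rep scale src tgt V F" using ind unfolding indecomposable_def by blast
  have ssV: "\<And>z. subspace (V z)" using rep unfolding is_rep_def fin_dim_subspace_def by blast
  have Wz: "\<And>z. z \<noteq> x \<Longrightarrow> ?W z = V z" by (simp add: restr_sp_def)
  have Wx: "?W x = {0}" by (simp add: restr_sp_def)
  have ssW: "\<And>z. subspace (?W z)"
  proof -
    fix z show "subspace (?W z)" using ssV[of z] Wz[of z] Wx by (cases "z = x") auto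
  qed
  have subr: "\<And>i. i<n \<Longrightarrow> is_subrep scale src tgt ?W ?G (N i)"
    using conjunct1[OF dec[unfolded is_decomp_def]] by blast
  have ssN: "\<And>i z. i<n \<Longrightarrow> subspace (N i z)" using subr unfolding is_subrep_def by blast
  have NW: "\<And>i z. i<n \<Longrightarrow> N i z \<subseteq> ?W z" using subr unfolding is_subrep_def by blast
  have NG: "\<And>i \<beta>. i<n \<Longrightarrow> ?G \<beta> ` N i (src \<beta>) \<subseteq> N i (tgt \<beta>)"
    using subr unfolding is_subrep_def by blast
  have Nx: "N i x = {0}" if "i < n" for i
    using NW[OF that, of x] Wx subspace_0[OF ssN[OF that, of x]] by blast
  note uniq = conjunct2[OF dec[unfolded is_decomp_def], rule_format]
  have zero_dec: "\<forall>i<n. u i = 0" if a: "\<forall>i<n. u i \<in> N i z" "(\<Sum>i<n. u i) = 0" for z u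
  proof -
    define u' where "u' i = (if i < n then u i else 0)" for i
    have P1: "(\<forall>i<n. u' i \<in> N i z) \<and> (\<forall>i\<ge>n. u' i = 0) \<and> 0 = (\<Sum>i<n. u' i)"
      using a unfolding u'_def by simp
    define zf where "zf = (\<lambda>_::nat. 0::'b)"
    have P2: "(\<forall>i<n. zf i \<in> N i z) \<and> (\<forall>i\<ge>n. zf i = 0) \<and> 0 = (\<Sum>i<n. zf i)"
      unfolding zf_def by (simp add: subspace_0[OF ssN])
    have e: "u' = zf" by (rule ex1_eq[OF uniq[OF subspace_0[OF ssW[of z]]], OF P1 P2])
    show ?thesis
    proof (intro allI impI)
      fix i assume "i < n"
      moreover have "u' i = 0" using e unfolding zf_def by simp
      ultimately show "u i = 0" unfolding u'_def by simp
    qed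
  qed
  have disjN: "w = 0" if "i<n" "j<n" "i\<noteq>j" "w \<in> N i z" "w \<in> N j z" for i j z w
  proof -
    define u1 where "u1 k = (if k = i then w else 0)" for k
    define u2 where "u2 k = (if k = j then w else 0)" for k
    have wW: "w \<in> ?W z" using NW that by blast
    have P1: "(\<forall>k<n. u1 k \<in> N k z) \<and> (\<forall>k\<ge>n. u1 k = 0) \<and> w = (\<Sum>k<n. u1 k)"
      using that unfolding u1_def by (simp add: sum.delta subspace_0[OF ssN])
    have P2: "(\<forall>k<n. u2 k \<in> N k z) \<and> (\<forall>k\<ge>n. u2 k = 0) \<and> w = (\<Sum>k<n. u2 k)"
      using that unfolding u2_def by (simp add: sum.delta subspace_0[OF ssN])
    have "u1 = u2" by (rule ex1_eq[OF uniq[OF wW], OF P1 P2])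
    then have "u1 i = u2 i" by simp
    then show ?thesis using that(3) unfolding u1_def u2_def by simp
  qed
  have RBi: "\<And>i. i<n \<Longrightarrow> RB scale src tgt (N i) ?G (y i) (bb i) (BB i)" using IH by blast
  have BBsub: "\<And>i z. i<n \<Longrightarrow> BB i z \<subseteq> N i z" using RB_D(1)[OF RBi] .
  have BBind: "\<And>i z. i<n \<Longrightarrow> independent (BB i z)" using RB_D(2)[OF RBi] .
  have BBspan: "\<And>i z. i<n \<Longrightarrow> N i z \<subseteq> span (BB i z)" using RB_D(3)[OF RBi] .
  have BBroot: "\<And>i. i<n \<Longrightarrow> BB i (y i) = {bb i}" using RB_D(4)[OF RBi] .
  have BBconn: "\<And>i v. i<n \<Longrightarrow> BB i v \<noteq> {} \<Longrightarrow> \<exists>p. walk src tgt p (y i) v \<and> (\<forall>w\<in>set p. BB i w \<noteq> {})"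
    using RB_D(7)[OF RBi] .
  have BBR4: "\<And>i yy z c. i<n \<Longrightarrow> adj src tgt yy z \<Longrightarrow> dist_q src tgt (y i) yy + 1 = dist_q src tgt (y i) z \<Longrightarrow>
      c \<in> BB i z \<Longrightarrow> (\<exists>!c'. c' \<in> BB i yy \<and> joined scale src tgt ?G (BB i) (z,c) (yy,c'))"
    using RB_D(8)[OF RBi] .
  have BBne0: "c \<noteq> 0" if "i<n" "c \<in> BB i z" for i z c
    using BBind[OF that(1)] that(2) dependent_zero by blast
  have BBx: "BB i x = {}" if "i<n" for i
    using BBsub[OF that, of x] Nx[OF that] BBne0[OF that] by blast
  have disjBB: "c \<notin> BB j z" if "i<n" "j<n" "i\<noteq>j" "c \<in> BB i z" for i j z c
    using disjN[OF that(1-3)] BBsub that BBne0 by blast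
  have Bx: "B x = {b}" unfolding B_def using BBx by simp
  have Bz: "\<And>z. z \<noteq> x \<Longrightarrow> B z = (\<Union>i<n. BB i z)" unfolding B_def by simp
  have BBB: "\<And>i z. i<n \<Longrightarrow> BB i z \<subseteq> B z" unfolding B_def by blast

  have R1: "B z \<subseteq> V z \<and> independent (B z) \<and> V z \<subseteq> span (B z)" for z
  proof (cases "z = x")
    case True
    then show ?thesis using Bx bV b0 dim1_span[OF dimx bV b0] by simp
  next
    case False
    have s1: "B z \<subseteq> V z" using Bz[OF False] BBsub NW Wz[OF False] by blast
    have s2: "independent (B z)"
      unfolding Bz[OF False]
      by (rule indep_union[where n=n and C="\<lambda>i. BB i z" and S="\<lambda>i. N i z", OF BBind BBsub ssN zero_dec disjBB])
    have s3: "V z \<subseteq> span (B z)"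
    proof
      fix v assume v: "v \<in> V z"
      then have vW: "v \<in> ?W z" using Wz[OF False] by simp
      obtain u where u: "\<forall>i<n. u i \<in> N i z" "v = (\<Sum>i<n. u i)"
        using ex1_implies_ex[OF uniq[OF vW]] by blast
      have "u i \<in> span (B z)" if "i < n" for i
        using u(1) that BBspan[OF that, of z] span_mono[OF BBB[OF that, of z]] by blast
      then show "v \<in> span (B z)" unfolding u(2) by (intro span_sum) auto
    qed
    show ?thesis using s1 s2 s3 by blast
  qed
  have Bind: "\<And>z. independent (B z)" using R1 by blast

  have R3: "\<exists>p. walk src tgt p x v \<and> (\<forall>w\<in>set p. B w \<noteq> {})" if ne: "B v \<noteq> {}" for v
  proof (cases "v = x")
    case True
    then show ?thesis using Bx by (intro exI[of _ "[x]"]) simp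
  next
    case False
    then obtain i c where i: "i < n" "c \<in> BB i v" using ne Bz by auto
    then obtain p where p: "walk src tgt p (y i) v" "\<forall>w\<in>set p. BB i w \<noteq> {}"
      using BBconn[OF i(1)] by blast
    obtain p' where p': "p = y i # p'" using p(1) by (cases p) (auto simp: walk_iff)
    have a1: "adj src tgt x (y i)" using ya i(1) by blast
    have a2: "walk src tgt (y i # p') (y i) v" using p(1) unfolding p' .
    have "walk src tgt (x # y i # p') x v" unfolding walk_Cons2 using a1 a2 by blast
    then have "walk src tgt (x # p) x v" unfolding p' .
    moreover have "\<forall>w\<in>set (x # p). B w \<noteq> {}"
    proof
      fix w assume w: "w \<in> set (x # p)"
      show "B w \<noteq> {}"
      proof (cases "w = x")
        case True then show ?thesis using Bx by simp
      next
        case False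
        then have "w \<in> set p" using w by simp
        then show ?thesis using p(2) BBB[OF i(1), of w] by blast
      qed
    qed
    ultimately show ?thesis by blast
  qed

  have R4: "\<exists>!c'. c' \<in> B yy \<and> joined scale src tgt F B (z,c) (yy,c')"
    if adjz: "adj src tgt yy z" and d: "dist_q src tgt x yy + 1 = dist_q src tgt x z" and c: "c \<in> B z"
    for yy z c
  proof -
    have zx: "z \<noteq> x" using d by auto
    obtain i where i: "i < n" "c \<in> BB i z" using c Bz[OF zx] by auto
    obtain p where p: "walk src tgt p (y i) z" "\<forall>w\<in>set p. BB i w \<noteq> {}"
      using BBconn[OF i(1)] i(2) by blast
    have xp: "x \<notin> set p" using p(2) BBx[OF i(1)] by blast
    have dz: "dist_q src tgt x z = dist_q src tgt (y i) z + 1"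
      using G1[OF T _ p(1) xp] ya i(1) by blast
    show ?thesis
    proof (cases "yy = x")
      case True
      then have "dist_q src tgt (y i) z = 0" using d dz by simp
      then have yiz: "y i = z" using dist_0[OF T] by blast
      then have cbb: "c = bb i" using i BBroot by blast
      have czB: "bb i \<in> B z" using i(2) cbb BBB[OF i(1)] by blast
      have J: "joined scale src tgt F B (z, bb i) (x, b)"
      proof -
        obtain \<alpha> where \<alpha>: "(src \<alpha> = x \<and> tgt \<alpha> = y i) \<or> (src \<alpha> = y i \<and> tgt \<alpha> = x)"
          using ya i(1) unfolding adj_def by blast
        show ?thesis
        proof (cases "src \<alpha> = x \<and> tgt \<alpha> = y i")
          case True
          obtain u where u: "\<forall>j<n. u j \<in> N j (y i)" "F \<alpha> b = (\<Sum>j<n. u j)" "bb i = u i"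
            using h10 i(1) True by blast
          have uj: "u j \<in> span (BB j z)" if "j < n" for j
            using u(1) that BBspan[OF that] yiz by blast
          have ujB: "u j \<in> span (B z)" if "j < n" for j
            using uj[OF that] span_mono[OF BBB[OF that]] by blast
          have rj: "representation (B z) (u j) (bb i) = (if j = i then 1 else 0)" if "j < n" for j
          proof (cases "j = i")
            case True
            then show ?thesis using representation_basis[OF Bind czB] u(3) by simp
          next
            case False
            have "representation (B z) (u j) = representation (BB j z) (u j)"
              by (rule representation_extend[OF Bind uj[OF that] BBB[OF that]])
            moreover have "bb i \<notin> BB j z" using disjBB[OF i(1) that] False i(2) cbb by auto
            ultimately show ?thesis using False representation_ne_zero by auto
          qed
          have "representation (B z) (F \<alpha> b) (bb i) = (\<Sum>j<n. representation (B z) (u j) (bb i))"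
            unfolding u(2) using representation_sum[OF Bind, of "{..<n}" u] ujB by simp
          also have "\<dots> = (\<Sum>j<n. if j = i then 1 else 0)" by (rule sum.cong) (use rj in auto)
          also have "\<dots> = 1" using i(1) by (simp add: sum.delta)
          finally have "representation (B z) (F \<alpha> b) (bb i) \<noteq> 0" by simp
          then have "coeff_arrow scale src tgt F B \<alpha> (x, b) (z, bb i)"
            unfolding coeff_arrow_def using True yiz Bx czB by simp
          then show ?thesis unfolding joined_def by blast
        next
          case False
          then have a2: "src \<alpha> = y i" "tgt \<alpha> = x" using \<alpha> by auto
          then have "F \<alpha> (bb i) = b" using h11 i(1) by blast
          moreover have "representation {b} b b = 1"
            using representation_basis[of "{b}" b] b0 by simp
          ultimately have "coeff_arrow scale src tgt F B \<alpha> (z, bb i) (x, b)"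
            unfolding coeff_arrow_def using a2 yiz Bx czB by simp
          then show ?thesis unfolding joined_def by blast
        qed
      qed
      show ?thesis
      proof (rule ex1I[of _ b])
        show "b \<in> B yy \<and> joined scale src tgt F B (z, c) (yy, b)" using J Bx True cbb by simp
        show "\<And>c'. c' \<in> B yy \<and> joined scale src tgt F B (z, c) (yy, c') \<Longrightarrow> c' = b"
          using Bx True by simp
      qed
    next
      case False
      have w2: "walk src tgt (p @ [yy]) (y i) yy" using walk_snoc[OF p(1) adj_sym[OF adjz]] .
      have "x \<notin> set (p @ [yy])" using xp False by simp
      then have dyy: "dist_q src tgt x yy = dist_q src tgt (y i) yy + 1"
        using G1[OF T _ w2] ya i(1) by blast
      have d2: "dist_q src tgt (y i) yy + 1 = dist_q src tgt (y i) z" using d dz dyy by simp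
      have ex: "\<exists>!c'. c' \<in> BB i yy \<and> joined scale src tgt ?G (BB i) (z,c) (yy,c')"
        using BBR4[OF i(1) adjz d2 i(2)] .
      have Geq: "?G \<beta> = F \<beta>" if "src \<beta> \<in> {yy, z}" "tgt \<beta> \<in> {yy, z}" for \<beta>
        using that False zx unfolding restr_map_def by auto
      have rtr: "representation (B t) w = representation (BB j t) w" if "j < n" "w \<in> N j t" for j t w
        using representation_extend[OF Bind _ BBB[OF that(1)]] BBspan[OF that(1)] that(2) by blast
      have cN: "c \<in> N i z" using BBsub[OF i(1)] i(2) by blast
      have tr: "joined scale src tgt F B (z,c) (yy,c') \<longleftrightarrow>
           c' \<in> BB i yy \<and> joined scale src tgt ?G (BB i) (z,c) (yy,c')" if c': "c' \<in> B yy" for c'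
      proof -
        obtain j where j: "j < n" "c' \<in> BB j yy" using c' Bz[OF False] by auto
        have c'N: "c' \<in> N j yy" using BBsub[OF j(1)] j(2) by blast
        have A: "coeff_arrow scale src tgt F B \<beta> (z,c) (yy,c') \<longleftrightarrow>
            c' \<in> BB i yy \<and> coeff_arrow scale src tgt ?G (BB i) \<beta> (z,c) (yy,c')" for \<beta>
        proof (cases "src \<beta> = z \<and> tgt \<beta> = yy")
          case True
          then have "?G \<beta> c \<in> N i yy" using NG[OF i(1), of \<beta>] cN by blast
          then have e: "representation (B yy) (F \<beta> c) = representation (BB i yy) (F \<beta> c)"
            using rtr[OF i(1)] Geq[of \<beta>] True by simp
          show ?thesis
            unfolding coeff_arrow_def using True e c' i(2) BBB[OF i(1)] Geq[of \<beta>]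
              representation_ne_zero[of "BB i yy" "F \<beta> c" c'] by auto
        next
          case False
          then show ?thesis unfolding coeff_arrow_def by auto
        qed
        have Bb: "coeff_arrow scale src tgt F B \<beta> (yy,c') (z,c) \<longleftrightarrow>
            c' \<in> BB i yy \<and> coeff_arrow scale src tgt ?G (BB i) \<beta> (yy,c') (z,c)" for \<beta>
        proof (cases "src \<beta> = yy \<and> tgt \<beta> = z")
          case True
          then have "?G \<beta> c' \<in> N j z" using NG[OF j(1), of \<beta>] c'N by blast
          then have e: "representation (B z) (F \<beta> c') = representation (BB j z) (F \<beta> c')"
            using rtr[OF j(1)] Geq[of \<beta>] True by simp
          show ?thesis
          proof
            assume h: "coeff_arrow scale src tgt F B \<beta> (yy,c') (z,c)"
            then have "representation (BB j z) (F \<beta> c') c \<noteq> 0" using e True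
              unfolding coeff_arrow_def by simp
            then have "c \<in> BB j z" using representation_ne_zero by blast
            then have "j = i" using disjBB[OF i(1) j(1)] i(2) by blast
            then show "c' \<in> BB i yy \<and> coeff_arrow scale src tgt ?G (BB i) \<beta> (yy,c') (z,c)"
              using h e True j(2) i(2) Geq[of \<beta>] unfolding coeff_arrow_def by simp
          next
            assume h: "c' \<in> BB i yy \<and> coeff_arrow scale src tgt ?G (BB i) \<beta> (yy,c') (z,c)"
            then have "c' \<in> N i yy" using BBsub[OF i(1)] by blast
            then have "?G \<beta> c' \<in> N i z" using NG[OF i(1), of \<beta>] True by blast
            then have e2: "representation (B z) (F \<beta> c') = representation (BB i z) (F \<beta> c')"
              using rtr[OF i(1)] Geq[of \<beta>] True by simp
            show "coeff_arrow scale src tgt F B \<beta> (yy,c') (z,c)"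
              using h e2 True c' c Geq[of \<beta>] unfolding coeff_arrow_def by simp
          qed
        next
          case False
          then show ?thesis unfolding coeff_arrow_def by auto
        qed
        show ?thesis unfolding joined_def using A Bb by blast
      qed
      have sBB: "BB i yy \<subseteq> B yy" using BBB[OF i(1)] .
      obtain c0 where c0: "c0 \<in> BB i yy" "joined scale src tgt ?G (BB i) (z,c) (yy,c0)"
        and c0u: "\<And>c''. c'' \<in> BB i yy \<Longrightarrow> joined scale src tgt ?G (BB i) (z,c) (yy,c'') \<Longrightarrow> c'' = c0"
        using ex by blast
      show ?thesis
      proof (rule ex1I[of _ c0])
        show "c0 \<in> B yy \<and> joined scale src tgt F B (z, c) (yy, c0)" using c0 sBB tr by blast
        show "\<And>c'. c' \<in> B yy \<and> joined scale src tgt F B (z, c) (yy, c') \<Longrightarrow> c' = c0"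
          using tr c0u by blast
      qed
    qed
  qed

  have Beq: "(\<lambda>z. (if z = x then {b} else {}) \<union> (\<Union>i<n. BB i z)) = B"
    by (rule ext) (simp add: B_def)
  have "RB scale src tgt V F x b B"
  proof (rule RB_I[where B=B and V=V and x=x and b=b and src=src and tgt=tgt and F=F])
    show "\<And>z. B z \<subseteq> V z" "\<And>z. independent (B z)" "\<And>z. V z \<subseteq> span (B z)" using R1 by blast+
    show "B x = {b}" "b \<in> V x" "b \<noteq> 0" by (fact Bx, fact bV, fact b0)
    show "\<And>v. B v \<noteq> {} \<Longrightarrow> \<exists>p. walk src tgt p x v \<and> (\<forall>w\<in>set p. B w \<noteq> {})" by (fact R3)
    show "\<And>y z c. adj src tgt y z \<Longrightarrow> dist_q src tgt x y + 1 = dist_q src tgt x z \<Longrightarrow> c \<in> B z \<Longrightarrow>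
      (\<exists>!c'. c' \<in> B y \<and> joined scale src tgt F B (z,c) (y,c'))" by (fact R4)
  qed
  then show ?thesis unfolding Beq .
qed

lemma rad_inv:
  assumes T: "tree_quiver src tgt"
  shows "rad_basis scale src tgt V F x b B \<Longrightarrow> RB scale src tgt V F x b B"
proof (induction rule: rad_basis.induct)
  case (simple V F x b)
  show ?case by (rule rb_simple[OF simple(1-5)])
next
  case (step V F x b n N y bb BB)
  have ya: "\<forall>i<n. adj src tgt x (y i)"
  proof (intro allI impI)
    fix i assume "i < n"
    then show "adj src tgt x (y i)" using step(9) by simp
  qed
  have IH: "\<forall>i<n. RB scale src tgt (N i) (restr_map src tgt F x) (y i) (bb i) (BB i)"
  proof (intro allI impI)
    fix i assume "i < n"
    then show "RB scale src tgt (N i) (restr_map src tgt F x) (y i) (bb i) (BB i)" using step(12) by simp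
  qed
  show ?case by (rule rb_step[OF T step(1) step(2) step(4) step(5) step(6) ya step(10) step(11) IH])
qed

end


definition "injk scale P f \<longleftrightarrow> (\<forall>u\<in>module.span scale P. f u = 0 \<longrightarrow> u = 0)"
definition "surjk scale P Q f \<longleftrightarrow> (\<forall>w\<in>module.span scale Q. \<exists>u\<in>module.span scale P. f u = w)"

context vector_space begin

lemma S0:
  assumes indP: "independent P" and indQ: "independent Q"
    and f: "lin_on scale (span P) (span Q) f"
    and p0: "p0 \<in> P" and z: "\<forall>q\<in>Q. representation Q (f p0) q = 0"
  shows "\<not> injk scale P f"
proof -
  have "f p0 \<in> span Q" using lin_on_in[OF f span_base[OF p0]] .
  then have "f p0 = 0" using rep_zero_all[OF indQ] z by blast
  moreover have "p0 \<noteq> 0" using indP p0 dependent_zero by blast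
  ultimately show ?thesis unfolding injk_def using span_base[OF p0] by blast
qed

lemma rep_lin:
  assumes indQ: "independent Q" and a: "a \<in> span Q" and b: "b \<in> span Q"
  shows "representation Q (a + b) q = representation Q a q + representation Q b q"
    "representation Q (c *s a) q = c * representation Q a q"
  using representation_add[OF indQ b a] representation_scale[OF indQ a] by simp_all

lemma vanish_not_surj:
  assumes f: "lin_on scale (span P) (span Q) f" and indQ: "independent Q"
    and phadd: "\<And>a b. a \<in> span Q \<Longrightarrow> b \<in> span Q \<Longrightarrow> ph (a + b) = ph a + ph b"
    and phsc: "\<And>a c. a \<in> span Q \<Longrightarrow> ph (c *s a) = c * ph a"
    and van: "\<And>p. p \<in> P \<Longrightarrow> ph (f p) = 0"
    and w: "w \<in> span Q" "ph w \<noteq> 0"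
  shows "\<not> surjk scale P Q f"
proof
  assume "surjk scale P Q f"
  then obtain u where u: "u \<in> span P" "f u = w" using w(1) unfolding surjk_def by blast
  have "\<forall>u\<in>span P. ph (f u) = 0"
    by (rule lin_vanish[OF f subspace_span phadd phsc van])
  then show False using u w(2) by auto
qed

lemma S1:
  assumes indQ: "independent Q"
    and f: "lin_on scale (span P) (span Q) f"
    and q: "q1 \<in> Q" "q2 \<in> Q" "q1 \<noteq> q2" and p: "p \<in> P"
    and r1: "representation Q (f p) q1 \<noteq> 0" and r2: "representation Q (f p) q2 \<noteq> 0"
    and oth: "\<forall>p'\<in>P. p' \<noteq> p \<longrightarrow> representation Q (f p') q1 = 0 \<and> representation Q (f p') q2 = 0"
  shows "\<not> surjk scale P Q f"
proof -
  define l1 where "l1 = representation Q (f p) q1"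
  define l2 where "l2 = representation Q (f p) q2"
  define ph where "ph w = representation Q w q1 * l2 - representation Q w q2 * l1" for w
  show ?thesis
  proof (rule vanish_not_surj[OF f indQ, of ph])
    show "ph (a + b) = ph a + ph b" if "a \<in> span Q" "b \<in> span Q" for a b
      unfolding ph_def using rep_lin(1)[OF indQ that] by (simp add: algebra_simps)
    show "ph (c *s a) = c * ph a" if "a \<in> span Q" for a c
      unfolding ph_def using rep_lin(2)[OF indQ that that] by (simp add: algebra_simps)
    show "ph (f p') = 0" if "p' \<in> P" for p'
    proof (cases "p' = p")
      case True then show ?thesis unfolding ph_def l1_def l2_def by (simp add: mult.commute)
    next
      case False then show ?thesis unfolding ph_def using oth that by simp
    qed
    show "q1 \<in> span Q" using span_base[OF q(1)] .
    show "ph q1 \<noteq> 0" unfolding ph_def using representation_basis[OF indQ q(1)] q(3) r2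
      unfolding l2_def by simp
  qed
qed

lemma T0:
  assumes indQ: "independent Q"
    and f: "lin_on scale (span P) (span Q) f"
    and q0: "q0 \<in> Q" and z: "\<forall>p\<in>P. representation Q (f p) q0 = 0"
  shows "\<not> surjk scale P Q f"
proof (rule vanish_not_surj[OF f indQ, of "\<lambda>w. representation Q w q0"])
  show "representation Q (a + b) q0 = representation Q a q0 + representation Q b q0"
    if "a \<in> span Q" "b \<in> span Q" for a b using rep_lin(1)[OF indQ that] .
  show "representation Q (c *s a) q0 = c * representation Q a q0"
    if "a \<in> span Q" for a c using rep_lin(2)[OF indQ that that] .
  show "representation Q (f p) q0 = 0" if "p \<in> P" for p using z that by blast
  show "q0 \<in> span Q" using span_base[OF q0] .
  show "representation Q q0 q0 \<noteq> 0" using representation_basis[OF indQ q0] by simp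
qed

lemma T1:
  assumes indP: "independent P" and indQ: "independent Q"
    and f: "lin_on scale (span P) (span Q) f"
    and p: "p1 \<in> P" "p2 \<in> P" "p1 \<noteq> p2" and q: "q \<in> Q"
    and r1: "representation Q (f p1) q \<noteq> 0" and r2: "representation Q (f p2) q \<noteq> 0"
    and oth: "\<forall>q'\<in>Q. q' \<noteq> q \<longrightarrow> representation Q (f p1) q' = 0 \<and> representation Q (f p2) q' = 0"
  shows "\<not> injk scale P f"
proof -
  define l1 where "l1 = representation Q (f p1) q"
  define l2 where "l2 = representation Q (f p2) q"
  have sp: "p1 \<in> span P" "p2 \<in> span P" using span_base p by auto
  have f1: "f p1 = l1 *s q" unfolding l1_def
    by (rule rep_single[OF indQ lin_on_in[OF f sp(1)] q]) (use oth in simp)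
  have f2: "f p2 = l2 *s q" unfolding l2_def
    by (rule rep_single[OF indQ lin_on_in[OF f sp(2)] q]) (use oth in simp)
  define u where "u = l2 *s p1 + (- l1) *s p2"
  have s1: "l2 *s p1 \<in> span P" "(- l1) *s p2 \<in> span P"
    by (rule span_scale[OF sp(1)], rule span_scale[OF sp(2)])
  have uP: "u \<in> span P" unfolding u_def using s1 span_add by blast
  have "f u = l2 *s f p1 + (- l1) *s f p2"
    unfolding u_def using lin_on_add[OF f s1] lin_on_scale[OF f sp(1), of l2] lin_on_scale[OF f sp(2), of "- l1"] by simp
  also have "\<dots> = (l2 * l1 + (- l1) * l2) *s q" unfolding f1 f2 by (simp add: scale_left_distrib)
  also have "\<dots> = 0" by (simp add: mult.commute)
  finally have fu: "f u = 0" .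
  have e1: "representation P u p1 = representation P (l2 *s p1) p1 + representation P ((- l1) *s p2) p1"
    unfolding u_def by (rule rep_lin(1)[OF indP s1])
  have e2: "representation P (l2 *s p1) p1 = l2 * representation P p1 p1"
    by (rule rep_lin(2)[OF indP sp(1) sp(1)])
  have e3: "representation P ((- l1) *s p2) p1 = (- l1) * representation P p2 p1"
    by (rule rep_lin(2)[OF indP sp(2) sp(2)])
  have "representation P u p1 = l2 * representation P p1 p1 + (- l1) * representation P p2 p1"
    unfolding e1 e2 e3 ..
  also have "\<dots> = l2" using representation_basis[OF indP p(1)] representation_basis[OF indP p(2)] p(3)
    by simp
  finally have "representation P u p1 \<noteq> 0" using r2 unfolding l2_def by simp
  then have "u \<noteq> 0" using representation_zero by auto
  then show ?thesis unfolding injk_def using uP fu by blast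
qed

lemma src_unique:
  assumes indP: "independent P" and indQ: "independent Q" and finP: "finite P" and finQ: "finite Q"
    and f: "lin_on scale (span P) (span Q) f"
    and mr: "injk scale P f \<or> surjk scale P Q f"
    and par: "\<forall>q\<in>Q. \<exists>!p. p \<in> P \<and> representation Q (f p) q \<noteq> 0"
  shows "card P \<le> card Q \<Longrightarrow> p \<in> P \<Longrightarrow> \<exists>q\<in>Q. representation Q (f p) q \<noteq> 0"
    and "card Q \<le> card P \<Longrightarrow> p \<in> P \<Longrightarrow> q1 \<in> Q \<Longrightarrow> q2 \<in> Q \<Longrightarrow>
      representation Q (f p) q1 \<noteq> 0 \<Longrightarrow> representation Q (f p) q2 \<noteq> 0 \<Longrightarrow> q1 = q2"
proof -
  define R where "R p q \<longleftrightarrow> representation Q (f p) q \<noteq> 0" for p q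
  define pa where "pa q = (THE p. p \<in> P \<and> R p q)" for q
  have paP: "pa q \<in> P \<and> R (pa q) q" if "q \<in> Q" for q
    unfolding pa_def using theI'[OF par[rule_format, OF that]] unfolding R_def .
  have pau: "p' = pa q" if "q \<in> Q" "p' \<in> P" "R p' q" for q p'
    unfolding pa_def using the1_equality[OF par[rule_format, OF that(1)]] that(2,3) unfolding R_def by simp
  {
    assume c: "card P \<le> card Q" and p: "p \<in> P"
    show "\<exists>q\<in>Q. representation Q (f p) q \<noteq> 0"
    proof (rule ccontr)
      assume "\<not> ?thesis"
      then have z: "\<forall>q\<in>Q. representation Q (f p) q = 0" by blast
      have sj: "surjk scale P Q f" using mr S0[OF indP indQ f p z] by blast
      have im: "pa ` Q \<subseteq> P - {p}" using paP z unfolding R_def by fastforce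
      have "card (P - {p}) < card Q" using card_Diff1_less[OF finP p] c by simp
      then have "\<not> inj_on pa Q" using card_inj_on_le[OF _ im] finP by fastforce
      then obtain q1 q2 where q: "q1 \<in> Q" "q2 \<in> Q" "q1 \<noteq> q2" "pa q1 = pa q2"
        unfolding inj_on_def by blast
      have "\<not> surjk scale P Q f"
      proof (rule S1[OF indQ f q(1-3)])
        show "pa q1 \<in> P" using paP q(1) by blast
        show "representation Q (f (pa q1)) q1 \<noteq> 0" using paP q(1) unfolding R_def by blast
        show "representation Q (f (pa q1)) q2 \<noteq> 0" using paP q(2) q(4) unfolding R_def by simp
        show "\<forall>p'\<in>P. p' \<noteq> pa q1 \<longrightarrow> representation Q (f p') q1 = 0 \<and> representation Q (f p') q2 = 0"
          using pau q unfolding R_def by metis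
      qed
      then show False using sj by blast
    qed
  }
  {
    assume c: "card Q \<le> card P" and p: "p \<in> P" and q: "q1 \<in> Q" "q2 \<in> Q"
      and r: "representation Q (f p) q1 \<noteq> 0" "representation Q (f p) q2 \<noteq> 0"
    show "q1 = q2"
    proof (rule ccontr)
      assume ne: "q1 \<noteq> q2"
      have e1: "pa q1 = p" "pa q2 = p" using pau[OF q(1) p] pau[OF q(2) p] r unfolding R_def by auto
      have "\<not> surjk scale P Q f"
      proof (rule S1[OF indQ f q ne p r])
        show "\<forall>p'\<in>P. p' \<noteq> p \<longrightarrow> representation Q (f p') q1 = 0 \<and> representation Q (f p') q2 = 0"
          using pau q e1 unfolding R_def by metis
      qed
      then have ij: "injk scale P f" using mr by blast
      have "\<not> inj_on pa Q" using e1 ne q unfolding inj_on_def by metis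
      then have "card (pa ` Q) < card Q"
        using inj_on_iff_eq_card[OF finQ, of pa] card_image_le[OF finQ, of pa] by linarith
      then have "card (pa ` Q) < card P" using c by simp
      moreover have "pa ` Q \<subseteq> P" using paP by blast
      ultimately have "\<not> P \<subseteq> pa ` Q" using card_mono[OF finite_imageI[OF finQ]] by fastforce
      then obtain p0 where p0: "p0 \<in> P" "p0 \<notin> pa ` Q" by blast
      have z: "\<forall>q\<in>Q. representation Q (f p0) q = 0"
      proof
        fix q assume qQ: "q \<in> Q"
        show "representation Q (f p0) q = 0"
        proof (rule ccontr)
          assume "representation Q (f p0) q \<noteq> 0"
          then have "p0 = pa q" using pau[OF qQ p0(1)] unfolding R_def by blast
          then show False using p0(2) qQ by blast
        qed
      qed
      show False using S0[OF indP indQ f p0(1) z] ij by blast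
    qed
  }
qed

lemma tgt_unique:
  assumes indP: "independent P" and indQ: "independent Q" and finP: "finite P" and finQ: "finite Q"
    and f: "lin_on scale (span P) (span Q) f"
    and mr: "injk scale P f \<or> surjk scale P Q f"
    and ch: "\<forall>p\<in>P. \<exists>!q. q \<in> Q \<and> representation Q (f p) q \<noteq> 0"
  shows "card Q \<le> card P \<Longrightarrow> q \<in> Q \<Longrightarrow> \<exists>p\<in>P. representation Q (f p) q \<noteq> 0"
    and "card P \<le> card Q \<Longrightarrow> q \<in> Q \<Longrightarrow> p1 \<in> P \<Longrightarrow> p2 \<in> P \<Longrightarrow>
      representation Q (f p1) q \<noteq> 0 \<Longrightarrow> representation Q (f p2) q \<noteq> 0 \<Longrightarrow> p1 = p2"
proof -
  define R where "R p q \<longleftrightarrow> representation Q (f p) q \<noteq> 0" for p q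
  define cf where "cf p = (THE q. q \<in> Q \<and> R p q)" for p
  have cfQ: "cf p \<in> Q \<and> R p (cf p)" if "p \<in> P" for p
    unfolding cf_def using theI'[OF ch[rule_format, OF that]] unfolding R_def .
  have cfu: "q' = cf p" if "p \<in> P" "q' \<in> Q" "R p q'" for p q'
    unfolding cf_def using the1_equality[OF ch[rule_format, OF that(1)]] that(2,3) unfolding R_def by simp
  {
    assume c: "card Q \<le> card P" and q: "q \<in> Q"
    show "\<exists>p\<in>P. representation Q (f p) q \<noteq> 0"
    proof (rule ccontr)
      assume "\<not> ?thesis"
      then have z: "\<forall>p\<in>P. representation Q (f p) q = 0" by blast
      have ij: "injk scale P f" using mr T0[OF indQ f q z] by blast
      have im: "cf ` P \<subseteq> Q - {q}" using cfQ z unfolding R_def by fastforce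
      have "card (Q - {q}) < card P" using card_Diff1_less[OF finQ q] c by simp
      then have "\<not> inj_on cf P" using card_inj_on_le[OF _ im] finQ by fastforce
      then obtain p1 p2 where p: "p1 \<in> P" "p2 \<in> P" "p1 \<noteq> p2" "cf p1 = cf p2"
        unfolding inj_on_def by blast
      have "\<not> injk scale P f"
      proof (rule T1[OF indP indQ f p(1-3)])
        show "cf p1 \<in> Q" using cfQ p(1) by blast
        show "representation Q (f p1) (cf p1) \<noteq> 0" using cfQ p(1) unfolding R_def by blast
        show "representation Q (f p2) (cf p1) \<noteq> 0" using cfQ p(2) p(4) unfolding R_def by simp
        show "\<forall>q'\<in>Q. q' \<noteq> cf p1 \<longrightarrow> representation Q (f p1) q' = 0 \<and> representation Q (f p2) q' = 0"
          using cfu p unfolding R_def by metis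
      qed
      then show False using ij by blast
    qed
  }
  {
    assume c: "card P \<le> card Q" and q: "q \<in> Q" and p: "p1 \<in> P" "p2 \<in> P"
      and r: "representation Q (f p1) q \<noteq> 0" "representation Q (f p2) q \<noteq> 0"
    show "p1 = p2"
    proof (rule ccontr)
      assume ne: "p1 \<noteq> p2"
      have e1: "cf p1 = q" "cf p2 = q" using cfu[OF p(1) q] cfu[OF p(2) q] r unfolding R_def by auto
      have "\<not> injk scale P f"
      proof (rule T1[OF indP indQ f p ne q r])
        show "\<forall>q'\<in>Q. q' \<noteq> q \<longrightarrow> representation Q (f p1) q' = 0 \<and> representation Q (f p2) q' = 0"
          using cfu p e1 unfolding R_def by metis
      qed
      then have sj: "surjk scale P Q f" using mr by blast
      have "\<not> inj_on cf P" using e1 ne p unfolding inj_on_def by metis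
      then have "card (cf ` P) < card P"
        using inj_on_iff_eq_card[OF finP, of cf] card_image_le[OF finP, of cf] by linarith
      then have "card (cf ` P) < card Q" using c by simp
      moreover have "cf ` P \<subseteq> Q" using cfQ by blast
      ultimately have "\<not> Q \<subseteq> cf ` P" using card_mono[OF finite_imageI[OF finP]] by fastforce
      then obtain q0 where q0: "q0 \<in> Q" "q0 \<notin> cf ` P" by blast
      have z: "\<forall>p\<in>P. representation Q (f p) q0 = 0"
      proof
        fix p assume pP: "p \<in> P"
        show "representation Q (f p) q0 = 0"
        proof (rule ccontr)
          assume "representation Q (f p) q0 \<noteq> 0"
          then have "q0 = cf p" using cfu[OF pP q0(1)] unfolding R_def by blast
          then show False using q0(2) pP by blast
        qed
      qed
      show False using T0[OF indQ f q0(1) z] sj by blast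
    qed
  }
qed

end

lemma joined_single:
  assumes T: "tree_quiver src tgt" and a: "src \<alpha> = s" "tgt \<alpha> = t"
  shows "joined scale src tgt F B (s,p) (t,q) \<longleftrightarrow>
           p \<in> B s \<and> q \<in> B t \<and> module.representation scale (B t) (F \<alpha> p) q \<noteq> 0"
    and "joined scale src tgt F B (t,q) (s,p) \<longleftrightarrow>
           p \<in> B s \<and> q \<in> B t \<and> module.representation scale (B t) (F \<alpha> p) q \<noteq> 0"
proof -
  have "src \<alpha> \<noteq> tgt \<alpha>" using T unfolding tree_quiver_def by blast
  then have st: "s \<noteq> t" using a by simp
  have eq: "\<beta> = \<alpha>" if "{src \<beta>, tgt \<beta>} = {s, t}" for \<beta>
    using T a that unfolding tree_quiver_def by metis
  have c1: "coeff_arrow scale src tgt F B \<beta> (s,p) (t,q) \<longleftrightarrow>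
      \<beta> = \<alpha> \<and> p \<in> B s \<and> q \<in> B t \<and> module.representation scale (B t) (F \<alpha> p) q \<noteq> 0" for \<beta>
  proof
    assume h: "coeff_arrow scale src tgt F B \<beta> (s,p) (t,q)"
    then have "src \<beta> = s" "tgt \<beta> = t" unfolding coeff_arrow_def by simp_all
    then have "\<beta> = \<alpha>" using eq by simp
    then show "\<beta> = \<alpha> \<and> p \<in> B s \<and> q \<in> B t \<and> module.representation scale (B t) (F \<alpha> p) q \<noteq> 0"
      using h a unfolding coeff_arrow_def by simp
  next
    assume "\<beta> = \<alpha> \<and> p \<in> B s \<and> q \<in> B t \<and> module.representation scale (B t) (F \<alpha> p) q \<noteq> 0"
    then show "coeff_arrow scale src tgt F B \<beta> (s,p) (t,q)" using a unfolding coeff_arrow_def by simp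
  qed
  have c2: "\<not> coeff_arrow scale src tgt F B \<beta> (t,q) (s,p)" for \<beta>
  proof
    assume h: "coeff_arrow scale src tgt F B \<beta> (t,q) (s,p)"
    then have "src \<beta> = t" "tgt \<beta> = s" unfolding coeff_arrow_def by simp_all
    then have "\<beta> = \<alpha>" using eq by auto
    then show False using a st \<open>src \<beta> = t\<close> by simp
  qed
  show "joined scale src tgt F B (s,p) (t,q) \<longleftrightarrow>
           p \<in> B s \<and> q \<in> B t \<and> module.representation scale (B t) (F \<alpha> p) q \<noteq> 0"
    unfolding joined_def using c1 c2 by blast
  show "joined scale src tgt F B (t,q) (s,p) \<longleftrightarrow>
           p \<in> B s \<and> q \<in> B t \<and> module.representation scale (B t) (F \<alpha> p) q \<noteq> 0"
    unfolding joined_def using c1 c2 by blast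
qed

theorem proposition3:
  fixes scale :: "'k::field \<Rightarrow> 'w::ab_group_add \<Rightarrow> 'w"
    and src tgt :: "'a \<Rightarrow> 'v"
    and V :: "'v \<Rightarrow> 'w set" and F :: "'a \<Rightarrow> 'w \<Rightarrow> 'w"
    and x y z :: 'v and b :: 'w and B :: "'v \<Rightarrow> 'w set"
  assumes vs: "vector_space scale"
    and lf: "locally_finite_quiver src tgt"
    and tree: "tree_quiver src tgt"
    and rad: "radiation scale src tgt V F x"
    and exc: "exceptional scale src tgt V F"
    and basis: "rad_basis scale src tgt V F x b B"
    and nb: "adj src tgt y z"
    and d: "dist_q src tgt x y + 1 = dist_q src tgt x z"
  shows "(\<forall>c\<in>B z. \<exists>!c'. c' \<in> B y \<and> joined scale src tgt F B (z, c) (y, c')) \<and>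
         (vector_space.dim scale (V y) \<le> vector_space.dim scale (V z) \<longrightarrow>
           (\<forall>c'\<in>B y. \<exists>c\<in>B z. joined scale src tgt F B (y, c') (z, c))) \<and>
         (vector_space.dim scale (V y) \<ge> vector_space.dim scale (V z) \<longrightarrow>
           (\<forall>c'\<in>B y. \<forall>c1\<in>B z. \<forall>c2\<in>B z. joined scale src tgt F B (y, c') (z, c1) \<and>
              joined scale src tgt F B (y, c') (z, c2) \<longrightarrow> c1 = c2))"
proof -
  interpret vector_space scale by (rule vs)
  have ind: "indecomposable scale src tgt V F" using exc unfolding exceptional_def by blast
  have ext: "ext1_zero scale src tgt V F" using exc unfolding exceptional_def by blast
  have rep: "is_rep scale src tgt V F" using ind unfolding indecomposable_def by blast
  have RBM: "RB scale src tgt V F x b B" by (rule rad_inv[OF tree basis])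
  have Bsub: "\<And>t. B t \<subseteq> V t" using RB_D(1)[OF RBM] .
  have Bind: "\<And>t. independent (B t)" using RB_D(2)[OF RBM] .
  have Bsp: "\<And>t. V t \<subseteq> span (B t)" using RB_D(3)[OF RBM] .
  have C1: "\<forall>c\<in>B z. \<exists>!c'. c' \<in> B y \<and> joined scale src tgt F B (z, c) (y, c')"
    using RB_D(8)[OF RBM nb d] by blast
  have ssV: "\<And>t. subspace (V t)" using rep unfolding is_rep_def fin_dim_subspace_def by blast
  have Veq: "\<And>t. span (B t) = V t" by (rule span_subspace[OF Bsub Bsp ssV])
  have fin: "finite (B t)" for t
  proof -
    obtain S where S: "finite S" "span S = V t"
      using rep unfolding is_rep_def fin_dim_subspace_def by blast
    have "B t \<subseteq> span S" using Bsub S(2) by simp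
    then show ?thesis using independent_span_bound[OF S(1) Bind] by blast
  qed
  have dimc: "\<And>t. dim (V t) = card (B t)" using basis_card_eq_dim[OF Bsub Bsp Bind] by simp
  obtain \<alpha> where \<alpha>: "(src \<alpha> = y \<and> tgt \<alpha> = z) \<or> (src \<alpha> = z \<and> tgt \<alpha> = y)"
    using nb unfolding adj_def by blast
  have lin0: "lin_on scale (V (src \<alpha>)) (V (tgt \<alpha>)) (F \<alpha>)" using rep unfolding is_rep_def by blast
  have mr0: "(\<forall>u\<in>V (src \<alpha>). F \<alpha> u = 0 \<longrightarrow> u = 0) \<or> (\<forall>w\<in>V (tgt \<alpha>). \<exists>u\<in>V (src \<alpha>). F \<alpha> u = w)"
    by (rule max_rank[OF rep ext])
  show ?thesis
  proof (cases "src \<alpha> = y \<and> tgt \<alpha> = z")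
    case True
    then have a: "src \<alpha> = y" "tgt \<alpha> = z" by simp_all
    have lin: "lin_on scale (span (B y)) (span (B z)) (F \<alpha>)" using lin0 unfolding a Veq .
    have mr: "injk scale (B y) (F \<alpha>) \<or> surjk scale (B y) (B z) (F \<alpha>)"
      using mr0 unfolding a injk_def surjk_def Veq .
    note J = joined_single[OF tree a, where scale=scale and F=F and B=B]
    have par: "\<forall>q\<in>B z. \<exists>!p. p \<in> B y \<and> representation (B z) (F \<alpha> p) q \<noteq> 0"
    proof
      fix q assume q: "q \<in> B z"
      have "\<And>p. (p \<in> B y \<and> joined scale src tgt F B (z, q) (y, p)) \<longleftrightarrow>
          (p \<in> B y \<and> representation (B z) (F \<alpha> p) q \<noteq> 0)"
        using J(2) q by blast
      note eqv = this
      have e: "\<exists>!p. p \<in> B y \<and> joined scale src tgt F B (z, q) (y, p)" using C1 q by blast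
      then obtain p0 where p0: "p0 \<in> B y \<and> joined scale src tgt F B (z, q) (y, p0)"
        and u: "\<And>p. p \<in> B y \<and> joined scale src tgt F B (z, q) (y, p) \<Longrightarrow> p = p0" by blast
      show "\<exists>!p. p \<in> B y \<and> representation (B z) (F \<alpha> p) q \<noteq> 0"
      proof (rule ex1I[of _ p0])
        show "p0 \<in> B y \<and> representation (B z) (F \<alpha> p0) q \<noteq> 0" using p0 eqv by blast
        show "\<And>p. p \<in> B y \<and> representation (B z) (F \<alpha> p) q \<noteq> 0 \<Longrightarrow> p = p0" using u eqv by blast
      qed
    qed
    note SU = src_unique[OF Bind Bind fin fin lin mr par]
    show ?thesis
    proof (intro conjI impI ballI)
      show "\<And>c. c \<in> B z \<Longrightarrow> \<exists>!c'. c' \<in> B y \<and> joined scale src tgt F B (z, c) (y, c')" using C1 by blast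
    next
      fix c' assume le: "dim (V y) \<le> dim (V z)" and c': "c' \<in> B y"
      obtain c where "c \<in> B z" "representation (B z) (F \<alpha> c') c \<noteq> 0"
        using SU(1)[OF _ c'] le dimc by auto
      then show "\<exists>c\<in>B z. joined scale src tgt F B (y, c') (z, c)" using J(1) c' by blast
    next
      fix c' c1 c2 assume ge: "dim (V z) \<le> dim (V y)" and c': "c' \<in> B y" and c: "c1 \<in> B z" "c2 \<in> B z"
        and jj: "joined scale src tgt F B (y, c') (z, c1) \<and> joined scale src tgt F B (y, c') (z, c2)"
      have r: "representation (B z) (F \<alpha> c') c1 \<noteq> 0" "representation (B z) (F \<alpha> c') c2 \<noteq> 0"
        using jj J(1) by blast+
      show "c1 = c2" using SU(2)[OF _ c' c r] ge dimc by auto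
    qed
  next
    case False
    then have a: "src \<alpha> = z" "tgt \<alpha> = y" using \<alpha> by auto
    have lin: "lin_on scale (span (B z)) (span (B y)) (F \<alpha>)" using lin0 unfolding a Veq .
    have mr: "injk scale (B z) (F \<alpha>) \<or> surjk scale (B z) (B y) (F \<alpha>)"
      using mr0 unfolding a injk_def surjk_def Veq .
    note J = joined_single[OF tree a, where scale=scale and F=F and B=B]
    have ch: "\<forall>p\<in>B z. \<exists>!q. q \<in> B y \<and> representation (B y) (F \<alpha> p) q \<noteq> 0"
    proof
      fix p assume p: "p \<in> B z"
      have "\<And>q. (q \<in> B y \<and> joined scale src tgt F B (z, p) (y, q)) \<longleftrightarrow>
          (q \<in> B y \<and> representation (B y) (F \<alpha> p) q \<noteq> 0)"
        using J(1) p by blast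
      note eqv = this
      have e: "\<exists>!q. q \<in> B y \<and> joined scale src tgt F B (z, p) (y, q)" using C1 p by blast
      then obtain q0 where q0: "q0 \<in> B y \<and> joined scale src tgt F B (z, p) (y, q0)"
        and u: "\<And>q. q \<in> B y \<and> joined scale src tgt F B (z, p) (y, q) \<Longrightarrow> q = q0" by blast
      show "\<exists>!q. q \<in> B y \<and> representation (B y) (F \<alpha> p) q \<noteq> 0"
      proof (rule ex1I[of _ q0])
        show "q0 \<in> B y \<and> representation (B y) (F \<alpha> p) q0 \<noteq> 0" using q0 eqv by blast
        show "\<And>q. q \<in> B y \<and> representation (B y) (F \<alpha> p) q \<noteq> 0 \<Longrightarrow> q = q0" using u eqv by blast
      qed
    qed
    note TU = tgt_unique[OF Bind Bind fin fin lin mr ch]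
    show ?thesis
    proof (intro conjI impI ballI)
      show "\<And>c. c \<in> B z \<Longrightarrow> \<exists>!c'. c' \<in> B y \<and> joined scale src tgt F B (z, c) (y, c')" using C1 by blast
    next
      fix c' assume le: "dim (V y) \<le> dim (V z)" and c': "c' \<in> B y"
      obtain c where "c \<in> B z" "representation (B y) (F \<alpha> c) c' \<noteq> 0"
        using TU(1)[OF _ c'] le dimc by auto
      then show "\<exists>c\<in>B z. joined scale src tgt F B (y, c') (z, c)" using J(2) c' by blast
    next
      fix c' c1 c2 assume ge: "dim (V z) \<le> dim (V y)" and c': "c' \<in> B y" and c: "c1 \<in> B z" "c2 \<in> B z"
        and jj: "joined scale src tgt F B (y, c') (z, c1) \<and> joined scale src tgt F B (y, c') (z, c2)"
      have r: "representation (B y) (F \<alpha> c1) c' \<noteq> 0" "representation (B y) (F \<alpha> c2) c' \<noteq> 0"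
        using jj J(2) by blast+
      show "c1 = c2" using TU(2)[OF _ c' c r] ge dimc by auto
    qed
  qed
qed

end
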